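(* Let $A$ be a closed symmetric relation in $\mathfrak H$, let $\{\mathcal H,\Gamma_0,\Gamma_1\}$ be an AB-generalized boundary triple for $A^*$ with $A_0=\ker\Gamma_0$, Weyl function $M(\cdot)$ and $\gamma$-field $\gamma(\cdot)$. Let $A_\Theta$ be a linear relation with $A\subset A_\Theta\subset\operatorname{dom}\Gamma$ and put $\Theta=\Gamma(A_\Theta)=\{\{\Gamma_0\hat f,\Gamma_1\hat f\}:\hat f\in A_\Theta\}$. Then for every $\lambda\in\rho(A_0)$ $(A_\Theta-\lambda)^{-1}=(A_0-\lambda)^{-1}+\gamma(\lambda)(\Theta-M(\lambda))^{-1}\gamma(\bar\lambda)^*$, where all inverses, sums and products are understood in the sense of linear relations (in particular $A_\Theta$ need not be closed and $\lambda$ need not belong to $\rho(A_\Theta)$).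
   Context: Linear relations: subspaces of product spaces; inverse $T^{-1}=\{\{g,f\}:\{f,g\}\in T\}$; sum $T_1+T_2=\{\{f,g+k\}:\{f,g\}\in T_1,\{f,k\}\in T_2\}$; product $ST=\{\{f,h\}:\exists g,\{f,g\}\in T,\{g,h\}\in S\}$. An AB-generalized boundary triple for $A^*$ is a single-valued linear operator $\Gamma=\{\Gamma_0,\Gamma_1\}:\mathfrak H^2\supset\operatorname{dom}\Gamma\to\mathcal H^2$ with $\operatorname{dom}\Gamma\subset A^*$ dense in $A^*$, satisfying Green's identity $(f',g)-(f,g')=(\Gamma_1\hat f,\Gamma_0\hat g)-(\Gamma_0\hat f,\Gamma_1\hat g)$ for $\hat f=\{f,f'\},\hat g=\{g,g'\}\in\operatorname{dom}\Gamma$, with $\operatorname{ran}\Gamma_0$ dense in $\mathcal H$ and $A_0=\ker\Gamma_0$ selfadjoint. Weyl function and $\gamma$-field: $M(\lambda)\Gamma_0\hat f_\lambda=\Gamma_1\hat f_\lambda$, $\gamma(\lambda)\Gamma_0\hat f_\lambda=f_\lambda$ for $\hat f_\lambda=\{f_\lambda,\lambda f_\lambda\}\in\operatorname{dom}\Gamma$; $\gamma(\bar\lambda)^*$ is the Hilbert space adjoint (a bounded everywhere defined operator $\mathfrak H\to\mathcal H$). *)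

theory Defs
  imports "HOL-Analysis.Analysis"
begin

class complex_hilbert = banach +
  fixes scaleC :: "complex \<Rightarrow> 'a \<Rightarrow> 'a" (infixr "*\<^sub>C" 75)
    and cinner :: "'a \<Rightarrow> 'a \<Rightarrow> complex"
  assumes scaleC_add_right: "a *\<^sub>C (x + y) = a *\<^sub>C x + a *\<^sub>C y"
    and scaleC_add_left: "(a + b) *\<^sub>C x = a *\<^sub>C x + b *\<^sub>C x"
    and scaleC_scaleC: "a *\<^sub>C (b *\<^sub>C x) = (a * b) *\<^sub>C x"
    and scaleC_one: "1 *\<^sub>C x = x"
    and scaleR_scaleC: "scaleR r x = complex_of_real r *\<^sub>C x"
    and cinner_add_left: "cinner (x + y) z = cinner x z + cinner y z"
    and cinner_scaleC_left: "cinner (a *\<^sub>C x) y = a * cinner x y"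
    and cinner_commute: "cinner x y = cnj (cinner y x)"
    and norm_cinner: "norm x = sqrt (Re (cinner x x))"

definition lin_rel :: "('a::complex_hilbert \<times> 'b::complex_hilbert) set \<Rightarrow> bool" where
  "lin_rel T \<longleftrightarrow> (0, 0) \<in> T
     \<and> (\<forall>f g f' g'. (f, g) \<in> T \<longrightarrow> (f', g') \<in> T \<longrightarrow> (f + f', g + g') \<in> T)
     \<and> (\<forall>c f g. (f, g) \<in> T \<longrightarrow> (c *\<^sub>C f, c *\<^sub>C g) \<in> T)"

definition rel_adj :: "('a::complex_hilbert \<times> 'b::complex_hilbert) set \<Rightarrow> ('b \<times> 'a) set" where
  "rel_adj T = {(f, f'). \<forall>g g'. (g, g') \<in> T \<longrightarrow> cinner f' g = cinner f g'}"

definition rel_inv :: "('a \<times> 'b) set \<Rightarrow> ('b \<times> 'a) set" where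
  "rel_inv T = {(g, f). (f, g) \<in> T}"

definition lrel_sum :: "('a \<times> 'b::ab_group_add) set \<Rightarrow> ('a \<times> 'b) set \<Rightarrow> ('a \<times> 'b) set" where
  "lrel_sum T1 T2 = {(f, g + k) | f g k. (f, g) \<in> T1 \<and> (f, k) \<in> T2}"

definition rel_diff :: "('a \<times> 'b::ab_group_add) set \<Rightarrow> ('a \<times> 'b) set \<Rightarrow> ('a \<times> 'b) set" where
  "rel_diff T1 T2 = {(f, g - k) | f g k. (f, g) \<in> T1 \<and> (f, k) \<in> T2}"

definition rel_mult :: "('b \<times> 'c) set \<Rightarrow> ('a \<times> 'b) set \<Rightarrow> ('a \<times> 'c) set" where
  "rel_mult S T = {(f, h). \<exists>g. (f, g) \<in> T \<and> (g, h) \<in> S}"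

definition rel_shift :: "('a::complex_hilbert \<times> 'a) set \<Rightarrow> complex \<Rightarrow> ('a \<times> 'a) set" where
  "rel_shift T z = {(f, g - z *\<^sub>C f) | f g. (f, g) \<in> T}"

definition symmetric_rel :: "('a::complex_hilbert \<times> 'a) set \<Rightarrow> bool" where
  "symmetric_rel A \<longleftrightarrow> A \<subseteq> rel_adj A"

definition selfadjoint_rel :: "('a::complex_hilbert \<times> 'a) set \<Rightarrow> bool" where
  "selfadjoint_rel A \<longleftrightarrow> A = rel_adj A"

definition resolvent_set :: "('a::complex_hilbert \<times> 'a) set \<Rightarrow> complex set" where
  "resolvent_set T = {z. \<exists>B. rel_inv (rel_shift T z) = {(x, B x) | x. True}
       \<and> bounded_linear B \<and> (\<forall>c x. B (c *\<^sub>C x) = c *\<^sub>C B x)}"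

text \<open>The boundary map \<Gamma> = {\<Gamma>0, \<Gamma>1} is given by two functions G0, G1 on the
  domain D = dom \<Gamma> (a subspace of the product space).\<close>
definition AB_gen_boundary_triple ::
  "('h::complex_hilbert \<times> 'h) set \<Rightarrow> ('h \<times> 'h) set \<Rightarrow> ('h \<times> 'h \<Rightarrow> 'k::complex_hilbert)
     \<Rightarrow> ('h \<times> 'h \<Rightarrow> 'k) \<Rightarrow> bool" where
  "AB_gen_boundary_triple A D G0 G1 \<longleftrightarrow>
     lin_rel D \<and> D \<subseteq> rel_adj A \<and> rel_adj A \<subseteq> closure D
   \<and> (\<forall>f g f' g'. (f, g) \<in> D \<longrightarrow> (f', g') \<in> D \<longrightarrow>
        G0 (f + f', g + g') = G0 (f, g) + G0 (f', g') \<and>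
        G1 (f + f', g + g') = G1 (f, g) + G1 (f', g'))
   \<and> (\<forall>c f g. (f, g) \<in> D \<longrightarrow>
        G0 (c *\<^sub>C f, c *\<^sub>C g) = c *\<^sub>C G0 (f, g) \<and>
        G1 (c *\<^sub>C f, c *\<^sub>C g) = c *\<^sub>C G1 (f, g))
   \<and> (\<forall>f f' g g'. (f, f') \<in> D \<longrightarrow> (g, g') \<in> D \<longrightarrow>
        cinner f' g - cinner f g' =
        cinner (G1 (f, f')) (G0 (g, g')) - cinner (G0 (f, f')) (G1 (g, g')))
   \<and> closure (G0 ` D) = UNIV
   \<and> selfadjoint_rel {fh \<in> D. G0 fh = 0}"

definition weyl_fun :: "('h::complex_hilbert \<times> 'h) set \<Rightarrow> ('h \<times> 'h \<Rightarrow> 'k::complex_hilbert)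
     \<Rightarrow> ('h \<times> 'h \<Rightarrow> 'k) \<Rightarrow> complex \<Rightarrow> ('k \<times> 'k) set" where
  "weyl_fun D G0 G1 z = {(G0 (f, z *\<^sub>C f), G1 (f, z *\<^sub>C f)) | f. (f, z *\<^sub>C f) \<in> D}"

definition gamma_field :: "('h::complex_hilbert \<times> 'h) set \<Rightarrow> ('h \<times> 'h \<Rightarrow> 'k::complex_hilbert)
     \<Rightarrow> complex \<Rightarrow> ('k \<times> 'h) set" where
  "gamma_field D G0 z = {(G0 (f, z *\<^sub>C f), f) | f. (f, z *\<^sub>C f) \<in> D}"

end

theory Submission imports Defs begin

lemma scaleC_zero_left[simp]: "(0::complex) *\<^sub>C (x::'a::complex_hilbert) = 0"
  by (metis of_real_0 scaleR_scaleC scaleR_zero_left)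
lemma scaleC_m1: "(-1::complex) *\<^sub>C (x::'a::complex_hilbert) = - x"
  by (metis of_real_1 of_real_minus scaleR_minus1_left scaleR_scaleC)
lemma scaleC_zero_right[simp]: "c *\<^sub>C (0::'a::complex_hilbert) = 0"
  by (metis add_cancel_right_left add_0 scaleC_add_right)
lemma scaleC_minus_right: "c *\<^sub>C (- x::'a::complex_hilbert) = - (c *\<^sub>C x)"
  by (metis scaleC_m1 scaleC_scaleC mult.commute)
lemma scaleC_minus_left: "(- c) *\<^sub>C (x::'a::complex_hilbert) = - (c *\<^sub>C x)"
  by (metis scaleC_m1 scaleC_scaleC mult_minus1)
lemma scaleC_diff_right: "c *\<^sub>C (x - y::'a::complex_hilbert) = c *\<^sub>C x - c *\<^sub>C y"
  by (metis diff_conv_add_uminus scaleC_add_right scaleC_minus_right)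
lemma scaleC_diff_left: "(a - b) *\<^sub>C (x::'a::complex_hilbert) = a *\<^sub>C x - b *\<^sub>C x"
  by (metis diff_conv_add_uminus scaleC_add_left scaleC_minus_left)

lemma cinner_zero_left[simp]: "cinner (0::'a::complex_hilbert) y = 0"
  by (metis add_0 add_cancel_right_left cinner_add_left)
lemma cinner_minus_left: "cinner (- x::'a::complex_hilbert) y = - cinner x y"
  by (metis scaleC_m1 cinner_scaleC_left mult_minus1)
lemma cinner_diff_left: "cinner (x - z::'a::complex_hilbert) y = cinner x y - cinner z y"
  by (metis diff_conv_add_uminus cinner_add_left cinner_minus_left)
lemma cinner_add_right: "cinner (x::'a::complex_hilbert) (y + z) = cinner x y + cinner x z"
  by (metis cinner_add_left cinner_commute complex_cnj_add)
lemma cinner_scaleC_right: "cinner (x::'a::complex_hilbert) (a *\<^sub>C y) = cnj a * cinner x y"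
  by (metis cinner_scaleC_left cinner_commute complex_cnj_mult)
lemma cinner_zero_right[simp]: "cinner (x::'a::complex_hilbert) 0 = 0"
  by (metis cinner_commute cinner_zero_left complex_cnj_zero)
lemma cinner_minus_right: "cinner (x::'a::complex_hilbert) (- y) = - cinner x y"
  by (metis cinner_commute cinner_minus_left complex_cnj_minus)
lemma cinner_diff_right: "cinner (x::'a::complex_hilbert) (y - z) = cinner x y - cinner x z"
  by (metis cinner_commute cinner_diff_left complex_cnj_diff)
lemma cinner_scaleR_left: "cinner (r *\<^sub>R x::'a::complex_hilbert) y = of_real r * cinner x y"
  by (simp add: scaleR_scaleC cinner_scaleC_left)
lemma cinner_scaleR_right: "cinner (x::'a::complex_hilbert) (r *\<^sub>R y) = of_real r * cinner x y"
  by (simp add: scaleR_scaleC cinner_scaleC_right)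

lemma cinner_self: "cinner (x::'a::complex_hilbert) x = of_real ((norm x)^2)"
proof -
  have im: "Im (cinner x x) = 0" using cinner_commute[of x x]
    by (metis cnj.sel(2) equal_neg_zero)
  have "norm x = sqrt (Re (cinner x x))" by (rule norm_cinner)
  moreover have "Re (cinner x x) \<ge> 0" using calculation
    by (metis norm_ge_zero real_sqrt_ge_0_iff)
  ultimately have "Re (cinner x x) = (norm x)^2" by simp
  with im show ?thesis by (simp add: complex_eq_iff)
qed

lemma cinner_self_eq_0: "cinner (x::'a::complex_hilbert) x = 0 \<longleftrightarrow> x = 0"
  by (simp add: cinner_self)

lemma Re_cinner_self: "Re (cinner (x::'a::complex_hilbert) x) = (norm x)^2"
  by (simp add: cinner_self)

lemma cinner_CS: "norm (cinner (x::'a::complex_hilbert) a) \<le> norm x * norm a"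
proof (cases "a = 0")
  case True then show ?thesis by simp
next
  case False
  define N where "N = (norm a)^2"
  define c where "c = cinner x a"
  have N: "N > 0" using False by (simp add: N_def)
  define t where "t = c / of_real N"
  have aa: "cinner a a = of_real N" by (simp add: cinner_self N_def)
  have ax: "cinner a x = cnj c" unfolding c_def by (rule cinner_commute)
  have "cinner (x - t *\<^sub>C a) (x - t *\<^sub>C a) =
      cinner x x - cnj t * c - t * cnj c + t * cnj t * of_real N"
    by (simp add: cinner_diff_left cinner_diff_right cinner_scaleC_left cinner_scaleC_right
        aa ax flip: c_def) (simp add: algebra_simps)
  also have "\<dots> = cinner x x - c * cnj c / of_real N"
    using N by (simp add: t_def field_simps)
  finally have "Re (cinner (x - t *\<^sub>C a) (x - t *\<^sub>C a)) = (norm x)^2 - (norm c)^2 / N"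
    by (simp add: cinner_self flip: complex_norm_square)
  moreover have "Re (cinner (x - t *\<^sub>C a) (x - t *\<^sub>C a)) \<ge> 0" by (simp add: cinner_self)
  ultimately have "(norm c)^2 / N \<le> (norm x)^2" by linarith
  then have "(norm c)^2 \<le> (norm x)^2 * N" using N by (simp add: divide_le_eq)
  then have "(norm c)^2 \<le> (norm x * norm a)^2" by (simp add: N_def power_mult_distrib)
  then have "norm c \<le> norm x * norm a" by (rule power2_le_imp_le) simp
  then show ?thesis by (simp only: c_def)
qed
lemma norm_cinner_sym: "norm (cinner (a::'a::complex_hilbert) x) = norm (cinner x a)"
proof -
  have "cinner a x = cnj (cinner x a)" by (rule cinner_commute)
  then show ?thesis by simp
qed

lemma bl_cinner_left: "bounded_linear (\<lambda>x::'a::complex_hilbert. cinner x a)"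
  by (rule bounded_linear_intro[where K="norm a"])
     (auto simp: cinner_add_left cinner_scaleR_left scaleR_conv_of_real cinner_CS)

lemma bl_cinner_right: "bounded_linear (\<lambda>x::'a::complex_hilbert. cinner a x)"
proof (rule bounded_linear_intro[where K="norm a"])
  fix x show "norm (cinner a x) \<le> norm x * norm a"
    using cinner_CS[of x a] norm_cinner_sym[of a x] by simp
qed (auto simp: cinner_add_right cinner_scaleR_right scaleR_conv_of_real)

lemma norm_diff_sq: "(norm (x - y::'a::complex_hilbert))^2 = (norm x)^2 + (norm y)^2 - 2 * Re (cinner x y)"
proof -
  have "cinner (x - y) (x - y) = cinner x x + cinner y y - (cinner x y + cnj (cinner x y))"
    by (simp add: cinner_diff_left cinner_diff_right cinner_commute[of y x])
  then have "Re (cinner (x - y) (x - y)) = Re (cinner x x) + Re (cinner y y) - 2 * Re (cinner x y)"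
    by simp
  then show ?thesis by (simp add: Re_cinner_self)
qed

lemma norm_add_sq: "(norm (x + y::'a::complex_hilbert))^2 = (norm x)^2 + (norm y)^2 + 2 * Re (cinner x y)"
  using norm_diff_sq[of x "-y"] by (simp add: cinner_minus_right)


lemma parallelogram: "(norm (a + b::'a::complex_hilbert))^2 + (norm (a - b))^2 = 2 * (norm a)^2 + 2 * (norm b)^2"
  using norm_add_sq[of a b] norm_diff_sq[of a b] by simp

lemma min_point_exists:
  fixes M :: "'a::complex_hilbert set"
  assumes cl: "closed M" and z: "0 \<in> M" and add: "\<And>a b. a \<in> M \<Longrightarrow> b \<in> M \<Longrightarrow> a + b \<in> M"
    and sc: "\<And>c a. a \<in> M \<Longrightarrow> c *\<^sub>C a \<in> M"
  shows "\<exists>p\<in>M. \<forall>m\<in>M. norm (x - p) \<le> norm (x - m)"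
proof -
  define S where "S = (\<lambda>m. norm (x - m)) ` M"
  define d where "d = Inf S"
  have Sne: "S \<noteq> {}" using z by (auto simp: S_def)
  have Sbdd: "bdd_below S" unfolding S_def by (rule bdd_belowI[of _ 0]) auto
  have dle: "d \<le> norm (x - m)" if "m \<in> M" for m
    unfolding d_def S_def by (rule cInf_lower) (use that Sbdd in \<open>auto simp: S_def\<close>)
  have d0: "d \<ge> 0" unfolding d_def by (rule cInf_greatest[OF Sne]) (auto simp: S_def)
  have "\<exists>m\<in>M. (norm (x - m))^2 < d^2 + inverse (real (Suc n))" for n
  proof -
    have "d < sqrt (d^2 + inverse (real (Suc n)))"
    proof -
      have "d^2 < d^2 + inverse (real (Suc n))" by simp
      then show ?thesis using d0 by (simp add: real_less_rsqrt)
    qed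
    then obtain s where "s \<in> S" "s < sqrt (d^2 + inverse (real (Suc n)))"
      using cInf_lessD[OF Sne] unfolding d_def by blast
    then obtain m where m: "m \<in> M" "norm (x - m) < sqrt (d^2 + inverse (real (Suc n)))"
      by (auto simp: S_def)
    then have "sqrt ((norm (x - m))^2) < sqrt (d^2 + inverse (real (Suc n)))" by simp
    then have "(norm (x - m))^2 < d^2 + inverse (real (Suc n))" by (simp only: real_sqrt_less_iff)
    with m show ?thesis by blast
  qed
  then obtain m where mM: "\<And>n. m n \<in> M" and mb: "\<And>n. (norm (x - m n))^2 < d^2 + inverse (real (Suc n))"
    by metis
  have key: "(norm (m n - m k))^2 \<le> 2 * inverse (real (Suc n)) + 2 * inverse (real (Suc k))" for n k
  proof -
    have mid: "(1/2::real) *\<^sub>R (m n + m k) \<in> M"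
      using add[OF mM mM] sc by (simp add: scaleR_scaleC)
    have "2 * d \<le> 2 * norm (x - (1/2::real) *\<^sub>R (m n + m k))" using dle[OF mid] by simp
    also have "\<dots> = norm ((x - m n) + (x - m k))"
    proof -
      have "(x - m n) + (x - m k) = 2 *\<^sub>R (x - (1/2::real) *\<^sub>R (m n + m k))"
        by (simp add: algebra_simps scaleR_2)
      then show ?thesis by simp
    qed
    finally have "2 * d \<le> norm ((x - m n) + (x - m k))" .
    then have "(2 * d)^2 \<le> (norm ((x - m n) + (x - m k)))^2"
      using d0 by (intro power_mono) auto
    moreover have "(norm ((x - m n) + (x - m k)))^2 + (norm ((x - m n) - (x - m k)))^2
        = 2 * (norm (x - m n))^2 + 2 * (norm (x - m k))^2"
      by (rule parallelogram)
    moreover have "(x - m n) - (x - m k) = m k - m n" by simp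
    moreover have "norm (m k - m n) = norm (m n - m k)" by (rule norm_minus_commute)
    ultimately show ?thesis using mb[of n] mb[of k] by (simp add: power_mult_distrib)
  qed
  have "Cauchy m"
  proof (rule CauchyI)
    fix e :: real assume e: "e > 0"
    obtain N where N: "4 / e^2 < real N" using reals_Archimedean2 by blast
    show "\<exists>M. \<forall>i\<ge>M. \<forall>j\<ge>M. norm (m i - m j) < e"
    proof (intro exI allI impI)
      fix i j assume ij: "N \<le> i" "N \<le> j"
      have e2: "e^2 > 0" using e by simp
      have "inverse (real (Suc i)) \<le> inverse (real (Suc N))" using ij by (simp add: field_simps)
      moreover have "inverse (real (Suc j)) \<le> inverse (real (Suc N))" using ij by (simp add: field_simps)
      moreover have "4 * inverse (real (Suc N)) < e^2"
      proof -
        have a: "4 < real N * e^2" using N e2 by (simp add: field_simps)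
        have b: "real N * e^2 < real (Suc N) * e^2" using e2 by simp
        from a b have "4 < real (Suc N) * e^2" by linarith
        then show ?thesis by (simp add: field_simps)
      qed
      ultimately have "(norm (m i - m j))^2 < e^2" using key[of i j] by linarith
      then show "norm (m i - m j) < e" using e by (simp add: power_less_imp_less_base)
    qed
  qed
  then obtain p where p: "m \<longlonglongrightarrow> p" using Cauchy_convergent_iff convergent_def by blast
  have pM: "p \<in> M" using closed_sequentially[OF cl mM p] .
  have "(norm (x - p))^2 \<le> d^2 + 0"
  proof (rule LIMSEQ_le)
    show "(\<lambda>n. (norm (x - m n))^2) \<longlonglongrightarrow> (norm (x - p))^2" by (intro tendsto_intros p)
    show "(\<lambda>n. d^2 + inverse (real (Suc n))) \<longlonglongrightarrow> d^2 + 0"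
      by (intro tendsto_intros LIMSEQ_inverse_real_of_nat)
    show "\<exists>N. \<forall>n\<ge>N. (norm (x - m n))^2 \<le> d^2 + inverse (real (Suc n))"
      using mb less_imp_le by blast
  qed
  then have "(norm (x - p))^2 \<le> d^2" by (simp only: add_0_right)
  then have "norm (x - p) \<le> d" using d0 by (rule power2_le_imp_le)
  then have "\<forall>m'\<in>M. norm (x - p) \<le> norm (x - m')" using dle by (blast intro: order_trans)
  then show ?thesis using pM by blast
qed

lemma proj_exists:
  fixes M :: "'a::complex_hilbert set"
  assumes cl: "closed M" and z: "0 \<in> M" and add: "\<And>a b. a \<in> M \<Longrightarrow> b \<in> M \<Longrightarrow> a + b \<in> M"
    and sc: "\<And>c a. a \<in> M \<Longrightarrow> c *\<^sub>C a \<in> M"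
  shows "\<exists>p\<in>M. \<forall>m\<in>M. cinner (x - p) m = 0"
proof -
  obtain p where pM: "p \<in> M" and pmin: "\<And>m. m \<in> M \<Longrightarrow> norm (x - p) \<le> norm (x - m)"
    using min_point_exists[OF assms, of x] by blast
  define r where "r = x - p"
  have "cinner r m = 0" if mM: "m \<in> M" for m
  proof -
    define c where "c = cinner r m"
    define t where "t = inverse ((norm m)^2 + 1)"
    have np: "(norm m)^2 + 1 > 0" by (rule add_nonneg_pos) simp_all
    have t0: "t > 0" using np by (simp add: t_def)
    have tm: "t * (norm m)^2 \<le> 1" using np by (simp add: t_def field_simps)
    define s where "s = complex_of_real t * c"
    have "p + s *\<^sub>C m \<in> M" using add[OF pM sc[OF mM]] .
    then have "norm r \<le> norm (r - s *\<^sub>C m)" using pmin by (simp add: r_def algebra_simps)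
    then have le: "(norm r)^2 \<le> (norm (r - s *\<^sub>C m))^2" by (simp add: power_mono)
    have mr: "cinner m r = cnj c" by (simp add: c_def cinner_commute[of m r])
    have mm: "cinner m m = of_real ((norm m)^2)" by (rule cinner_self)
    have "cinner (r - s *\<^sub>C m) (r - s *\<^sub>C m)
        = cinner r r - cnj s * c - s * cnj c + s * cnj s * of_real ((norm m)^2)"
      by (simp add: cinner_diff_left cinner_diff_right cinner_scaleC_left cinner_scaleC_right
          mm mr flip: c_def) (simp add: algebra_simps)
    also have "\<dots> = cinner r r - of_real (2 * t) * (c * cnj c) + of_real (t^2 * (norm m)^2) * (c * cnj c)"
      by (simp add: s_def power2_eq_square algebra_simps)
    also have "\<dots> = cinner r r - of_real (2 * t * (norm c)^2) + of_real (t^2 * (norm m)^2 * (norm c)^2)"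
      by (simp only: of_real_mult flip: complex_norm_square)
    finally have E: "cinner (r - s *\<^sub>C m) (r - s *\<^sub>C m) = cinner r r - of_real (2 * t * (norm c)^2) + of_real (t^2 * (norm m)^2 * (norm c)^2)" .
    have "complex_of_real ((norm (r - s *\<^sub>C m))^2) = complex_of_real ((norm r)^2 - 2 * t * (norm c)^2 + t^2 * (norm m)^2 * (norm c)^2)"
      using E unfolding cinner_self by simp
    then have "(norm (r - s *\<^sub>C m))^2 = (norm r)^2 - 2 * t * (norm c)^2 + t^2 * (norm m)^2 * (norm c)^2"
      by (simp only: of_real_eq_iff)
    with le have "2 * t * (norm c)^2 \<le> t * (norm c)^2 * (t * (norm m)^2)"
      by (simp add: power2_eq_square algebra_simps)
    also have "\<dots> \<le> t * (norm c)^2 * 1"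
      using tm t0 by (intro mult_left_mono) auto
    finally have "t * (norm c)^2 \<le> 0" by simp
    then have "(norm c)^2 \<le> 0" using t0 by (simp add: mult_le_0_iff)
    then show ?thesis unfolding c_def by simp
  qed
  then show ?thesis using pM unfolding r_def by blast
qed

lemma riesz:
  fixes \<psi> :: "'a::complex_hilbert \<Rightarrow> complex"
  assumes bl: "bounded_linear \<psi>" and hom: "\<And>c x. \<psi> (c *\<^sub>C x) = c * \<psi> x"
  shows "\<exists>y. \<forall>x. \<psi> x = cinner x y"
proof (cases "\<forall>x. \<psi> x = 0")
  case True then show ?thesis by (intro exI[of _ 0]) simp
next
  case False
  then obtain x0 where x0: "\<psi> x0 \<noteq> 0" by blast
  define K where "K = {x. \<psi> x = 0}"
  have add: "\<psi> (a + b) = \<psi> a + \<psi> b" for a b using bl by (simp add: linear_simps)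
  have clK: "closed K" unfolding K_def
    by (rule closed_Collect_eq) (auto intro: linear_continuous_on bl)
  obtain p where pK: "p \<in> K" and po: "\<And>m. m \<in> K \<Longrightarrow> cinner (x0 - p) m = 0"
    using proj_exists[OF clK, of x0] unfolding K_def
    by (auto simp: add hom bl linear_simps)
  define v where "v = x0 - p"
  have pv: "\<psi> v = \<psi> x0" using pK bl by (simp add: v_def K_def linear_simps)
  have v0: "v \<noteq> 0" using pv x0 bl by (auto simp: linear_simps)
  have vv: "cinner v v \<noteq> 0" using v0 by (simp add: cinner_self_eq_0)
  show ?thesis
  proof (intro exI allI)
    fix x
    have "(\<psi> x) *\<^sub>C v - (\<psi> v) *\<^sub>C x \<in> K"
      using bl by (simp add: K_def linear_simps hom mult.commute)
    then have "cinner v ((\<psi> x) *\<^sub>C v - (\<psi> v) *\<^sub>C x) = 0" using po v_def by blast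
    then have "cnj (\<psi> x) * cinner v v - cnj (\<psi> v) * cinner v x = 0"
      by (simp add: cinner_diff_right cinner_scaleC_right)
    then have "cnj (cnj (\<psi> x) * cinner v v - cnj (\<psi> v) * cinner v x) = 0" by simp
    then have "\<psi> x * cinner v v = \<psi> v * cinner x v"
      using cinner_commute[of v v] cinner_commute[of x v] by simp
    then have "\<psi> x = \<psi> v * cinner x v / cinner v v" using vv by (simp add: field_simps)
    also have "\<dots> = cinner x ((cnj (\<psi> v / cinner v v)) *\<^sub>C v)"
      by (simp add: cinner_scaleC_right)
    finally show "\<psi> x = cinner x ((cnj (\<psi> v / cinner v v)) *\<^sub>C v)" .
  qed
qed

instantiation prod :: (complex_hilbert, complex_hilbert) complex_hilbert
begin
definition scaleC_prod_def: "scaleC c p = (c *\<^sub>C fst p, c *\<^sub>C snd p)"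
definition cinner_prod_def: "cinner p q = cinner (fst p) (fst q) + cinner (snd p) (snd q)"
instance proof
  fix a b :: complex and x y z :: "'a \<times> 'b" and r :: real
  show "a *\<^sub>C (x + y) = a *\<^sub>C x + a *\<^sub>C y" by (simp add: scaleC_prod_def scaleC_add_right)
  show "(a + b) *\<^sub>C x = a *\<^sub>C x + b *\<^sub>C x" by (simp add: scaleC_prod_def scaleC_add_left)
  show "a *\<^sub>C b *\<^sub>C x = (a * b) *\<^sub>C x" by (simp add: scaleC_prod_def scaleC_scaleC)
  show "1 *\<^sub>C x = x" by (simp add: scaleC_prod_def scaleC_one)
  show "r *\<^sub>R x = complex_of_real r *\<^sub>C x" by (simp add: scaleC_prod_def scaleR_prod_def scaleR_scaleC)
  show "cinner (x + y) z = cinner x z + cinner y z" by (simp add: cinner_prod_def cinner_add_left)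
  show "cinner (a *\<^sub>C x) y = a * cinner x y" by (simp add: cinner_prod_def scaleC_prod_def cinner_scaleC_left algebra_simps)
  show "cinner x y = cnj (cinner y x)" by (simp add: cinner_prod_def cinner_commute[of "fst x"] cinner_commute[of "snd x"])
  show "norm x = sqrt (Re (cinner x x))" by (simp add: cinner_prod_def norm_prod_def Re_cinner_self)
qed
end

lemma adj_adj:
  fixes A :: "('a::complex_hilbert \<times> 'b::complex_hilbert) set"
  assumes lin: "lin_rel A" and cl: "closed A"
  shows "rel_adj (rel_adj A) \<subseteq> A"
proof
  fix xx assume xx: "xx \<in> rel_adj (rel_adj A)"
  obtain x x' where xxd: "xx = (x, x')" by fastforce
  have "\<exists>p\<in>A. \<forall>m\<in>A. cinner (xx - p) m = 0"
  proof (rule proj_exists[OF cl])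
    show "0 \<in> A" using lin by (simp add: lin_rel_def zero_prod_def)
    show "a + b \<in> A" if "a \<in> A" "b \<in> A" for a b
      using lin that unfolding lin_rel_def by (cases a, cases b) auto
    show "c *\<^sub>C a \<in> A" if "a \<in> A" for c a
      using lin that unfolding lin_rel_def by (cases a) (auto simp: scaleC_prod_def)
  qed
  then obtain p p' where pA: "(p, p') \<in> A" and po: "\<And>a a'. (a, a') \<in> A \<Longrightarrow> cinner (x - p) a + cinner (x' - p') a' = 0"
    unfolding xxd cinner_prod_def by fastforce
  define r where "r = x - p"
  define r' where "r' = x' - p'"
  have "\<forall>g g'. (g, g') \<in> A \<longrightarrow> cinner (- r) g = cinner r' g'"
  proof (intro allI impI)
    fix g g' assume "(g, g') \<in> A"
    from po[OF this] have "cinner r g + cinner r' g' = 0" by (simp add: r_def r'_def)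
    then have "- cinner r g = cinner r' g'" by (rule minus_unique)
    then show "cinner (- r) g = cinner r' g'" by (simp add: cinner_minus_left)
  qed
  then have radj: "(r', - r) \<in> rel_adj A" unfolding rel_adj_def by simp
  have e1: "cinner x' r' = cinner x (- r)" using xx radj unfolding xxd rel_adj_def by blast
  have e2: "cinner (- r) p = cinner r' p'" using radj pA unfolding rel_adj_def by blast
  have e2': "cinner p' r' = cinner p (- r)"
    using e2 cinner_commute[of p' r'] cinner_commute[of p "-r"] by simp
  have "cinner r' r' = cinner r (- r)"
  proof -
    have "cinner r' r' = cinner x' r' - cinner p' r'" unfolding r'_def by (rule cinner_diff_left)
    also have "\<dots> = cinner x (- r) - cinner p (- r)" using e1 e2' by simp
    also have "\<dots> = cinner r (- r)" unfolding r_def by (rule cinner_diff_left[symmetric])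
    finally show ?thesis .
  qed
  then have "cinner r' r' + cinner r r = 0" by (simp add: cinner_minus_right)
  then have "(norm r')^2 + (norm r)^2 = 0"
    unfolding cinner_self by (metis of_real_add of_real_eq_0_iff)
  then have "r = 0" "r' = 0" by (simp_all add: add_nonneg_eq_0_iff)
  then show "xx \<in> A" using pA unfolding xxd r_def r'_def by simp
qed

lemma lin_rel_add: "lin_rel T \<Longrightarrow> (a, b) \<in> T \<Longrightarrow> (c, d) \<in> T \<Longrightarrow> (a + c, b + d) \<in> T"
  unfolding lin_rel_def by blast
lemma lin_rel_scale: "lin_rel T \<Longrightarrow> (a, b) \<in> T \<Longrightarrow> (k *\<^sub>C a, k *\<^sub>C b) \<in> T"
  unfolding lin_rel_def by blast
lemma lin_rel_diff: "lin_rel T \<Longrightarrow> (a, b) \<in> T \<Longrightarrow> (c, d) \<in> T \<Longrightarrow> (a - c, b - d) \<in> T"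
  using lin_rel_add[of T a b "-c" "-d"] lin_rel_scale[of T c d "-1"] by (simp add: scaleC_m1)

lemma G_diff:
  assumes lin: "lin_rel D"
    and ad: "\<forall>f g f' g'. (f, g) \<in> D \<longrightarrow> (f', g') \<in> D \<longrightarrow> G (f + f', g + g') = G (f, g) + G (f', g')"
    and ho: "\<forall>c f g. (f, g) \<in> D \<longrightarrow> G (c *\<^sub>C f, c *\<^sub>C g) = c *\<^sub>C (G (f, g) :: 'k::complex_hilbert)"
    and ab: "(a, b) \<in> D" and cd: "(c, d) \<in> D"
  shows "G (a - c, b - d) = G (a, b) - G (c, d)"
proof -
  have m: "(- c, - d) \<in> D" using lin_rel_scale[OF lin cd, of "-1"] by (simp add: scaleC_m1)
  have "G ((-1) *\<^sub>C c, (-1) *\<^sub>C d) = (-1) *\<^sub>C G (c, d)" using ho cd by blast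
  then have "G (- c, - d) = - G (c, d)" by (simp only: scaleC_m1)
  moreover have "G (a + - c, b + - d) = G (a, b) + G (- c, - d)" using ad ab m by blast
  ultimately show ?thesis by (simp only: diff_conv_add_uminus)
qed

lemma G_add:
  assumes ad: "\<forall>f g f' g'. (f, g) \<in> D \<longrightarrow> (f', g') \<in> D \<longrightarrow> G (f + f', g + g') = G (f, g) + G (f', g')"
    and ab: "(a, b) \<in> D" and cd: "(c, d) \<in> D"
  shows "G (a + c, b + d) = G (a, b) + G (c, d)"
  using ad ab cd by blast


theorem mainTheorem7:
  fixes A A\<Theta> D :: "('h::complex_hilbert \<times> 'h) set"
    and G0 G1 :: "'h \<times> 'h \<Rightarrow> 'k::complex_hilbert"
    and z :: complex
  assumes "lin_rel A" and "closed A" and "symmetric_rel A"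
    and "AB_gen_boundary_triple A D G0 G1"
    and "lin_rel A\<Theta>" and "A \<subseteq> A\<Theta>" and "A\<Theta> \<subseteq> D"
    and "z \<in> resolvent_set {fh \<in> D. G0 fh = 0}"
  shows "rel_inv (rel_shift A\<Theta> z) =
    lrel_sum (rel_inv (rel_shift {fh \<in> D. G0 fh = 0} z))
      (rel_mult (gamma_field D G0 z)
        (rel_mult (rel_inv (rel_diff {(G0 fh, G1 fh) | fh. fh \<in> A\<Theta>} (weyl_fun D G0 G1 z)))
          (rel_adj (gamma_field D G0 (cnj z)))))"
proof -
  note linA = assms(1) and clA = assms(2) and AB = assms(4) and linT = assms(5)
    and AT = assms(6) and TD = assms(7) and res = assms(8)
  define A0 where "A0 = {fh \<in> D. G0 fh = 0}"
  define \<Theta> where "\<Theta> = {(G0 fh, G1 fh) | fh. fh \<in> A\<Theta>}"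
  have linD: "lin_rel D" and DA: "D \<subseteq> rel_adj A" and cloD: "rel_adj A \<subseteq> closure D"
    using AB unfolding AB_gen_boundary_triple_def by blast+
  have ad0: "\<forall>f g f' g'. (f, g) \<in> D \<longrightarrow> (f', g') \<in> D \<longrightarrow> G0 (f + f', g + g') = G0 (f, g) + G0 (f', g')"
    and ad1: "\<forall>f g f' g'. (f, g) \<in> D \<longrightarrow> (f', g') \<in> D \<longrightarrow> G1 (f + f', g + g') = G1 (f, g) + G1 (f', g')"
    and ho0: "\<forall>c f g. (f, g) \<in> D \<longrightarrow> G0 (c *\<^sub>C f, c *\<^sub>C g) = c *\<^sub>C G0 (f, g)"
    and ho1: "\<forall>c f g. (f, g) \<in> D \<longrightarrow> G1 (c *\<^sub>C f, c *\<^sub>C g) = c *\<^sub>C G1 (f, g)"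
    and green: "\<forall>f f' g g'. (f, f') \<in> D \<longrightarrow> (g, g') \<in> D \<longrightarrow>
        cinner f' g - cinner f g' =
        cinner (G1 (f, f')) (G0 (g, g')) - cinner (G0 (f, f')) (G1 (g, g'))"
    and sa: "selfadjoint_rel A0"
    using AB unfolding AB_gen_boundary_triple_def A0_def by blast+
  have G0d: "G0 (a - c, b - d) = G0 (a, b) - G0 (c, d)" if "(a, b) \<in> D" "(c, d) \<in> D" for a b c d
    by (rule G_diff[OF linD ad0 ho0 that])
  have G1d: "G1 (a - c, b - d) = G1 (a, b) - G1 (c, d)" if "(a, b) \<in> D" "(c, d) \<in> D" for a b c d
    by (rule G_diff[OF linD ad1 ho1 that])
  have G0a: "G0 (a + c, b + d) = G0 (a, b) + G0 (c, d)" if "(a, b) \<in> D" "(c, d) \<in> D" for a b c d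
    using ad0 that by blast
  have A0D: "A0 \<subseteq> D" unfolding A0_def by blast
  obtain B where RB: "rel_inv (rel_shift A0 z) = {(x, B x) | x. True}"
    and blB: "bounded_linear B" and hoB: "\<And>c x. B (c *\<^sub>C x) = c *\<^sub>C B x"
    using res unfolding resolvent_set_def A0_def by blast
  have gh: "(B x, x + z *\<^sub>C B x) \<in> A0" for x
  proof -
    have "(x, B x) \<in> rel_inv (rel_shift A0 z)" using RB by blast
    then obtain f g where "(f, g) \<in> A0" "x = g - z *\<^sub>C f" "B x = f"
      unfolding rel_inv_def rel_shift_def by blast
    then show ?thesis by simp
  qed
  have Binv: "f = B (g - z *\<^sub>C f)" if "(f, g) \<in> A0" for f g
  proof -
    have "(g - z *\<^sub>C f, f) \<in> rel_inv (rel_shift A0 z)" using that unfolding rel_inv_def rel_shift_def by blast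
    then show ?thesis using RB by blast
  qed
  have B0: "B 0 = 0" using blB by (simp add: linear_simps)
  have Nz: "x = 0" if "(x, z *\<^sub>C x) \<in> A0" for x
    using Binv[OF that] B0 by simp
  have N1: "\<exists>a a'. (a, a') \<in> A0 \<and> a' - cnj z *\<^sub>C a = h" for h
  proof -
    have bl\<psi>: "bounded_linear (\<lambda>x. cinner (B x) h)"
      using bounded_linear_compose[OF bl_cinner_left blB] by simp
    have "\<exists>y. \<forall>x. cinner (B x) h = cinner x y"
      by (rule riesz[OF bl\<psi>]) (simp add: hoB cinner_scaleC_left)
    then obtain y where y: "\<And>x. cinner (B x) h = cinner x y" by blast
    have "(y, h + cnj z *\<^sub>C y) \<in> rel_adj A0"
      unfolding rel_adj_def
    proof (clarsimp)
      fix f f' assume ff: "(f, f') \<in> A0"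
      define x where "x = f' - z *\<^sub>C f"
      have fx: "f = B x" using Binv[OF ff] by (simp add: x_def)
      have f'x: "f' = x + z *\<^sub>C f" by (simp add: x_def)
      have "cinner h f = cinner y x"
        using y[of x] cinner_commute[of h f] cinner_commute[of y x] fx by simp
      then show "cinner (h + cnj z *\<^sub>C y) f = cinner y f'"
        by (simp add: f'x cinner_add_left cinner_add_right cinner_scaleC_left cinner_scaleC_right)
    qed
    then have "(y, h + cnj z *\<^sub>C y) \<in> A0" using sa unfolding selfadjoint_rel_def by simp
    then show ?thesis by (intro exI[of _ y] exI[of _ "h + cnj z *\<^sub>C y"]) simp
  qed
  have GQ: "cinner (G1 (B x, x + z *\<^sub>C B x)) (G0 (q, cnj z *\<^sub>C q)) = cinner x q"
    if q: "(q, cnj z *\<^sub>C q) \<in> D" for x q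
  proof -
    have gD: "(B x, x + z *\<^sub>C B x) \<in> D" using gh A0D by blast
    have g0: "G0 (B x, x + z *\<^sub>C B x) = 0" using gh unfolding A0_def by blast
    have "cinner (x + z *\<^sub>C B x) q - cinner (B x) (cnj z *\<^sub>C q) =
        cinner (G1 (B x, x + z *\<^sub>C B x)) (G0 (q, cnj z *\<^sub>C q)) - cinner (G0 (B x, x + z *\<^sub>C B x)) (G1 (q, cnj z *\<^sub>C q))"
      using green gD q by blast
    then show ?thesis using g0 by (simp add: cinner_add_left cinner_scaleC_left cinner_scaleC_right)
  qed
  have AdjG: "(x, G1 (B x, x + z *\<^sub>C B x)) \<in> rel_adj (gamma_field D G0 (cnj z))" for x
    unfolding rel_adj_def gamma_field_def using GQ by auto
  have "rel_inv (rel_shift A\<Theta> z) = lrel_sum (rel_inv (rel_shift A0 z))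
      (rel_mult (gamma_field D G0 z)
        (rel_mult (rel_inv (rel_diff \<Theta> (weyl_fun D G0 G1 z)))
          (rel_adj (gamma_field D G0 (cnj z)))))"
  proof (rule set_eqI, rule iffI)
    fix hf assume "hf \<in> rel_inv (rel_shift A\<Theta> z)"
    then obtain f f' where ffT: "(f, f') \<in> A\<Theta>" and hf: "hf = (f' - z *\<^sub>C f, f)"
      unfolding rel_inv_def rel_shift_def by blast
    define h where "h = f' - z *\<^sub>C f"
    define y where "y = f - B h"
    have ffD: "(f, f') \<in> D" using ffT TD by blast
    have ghD: "(B h, h + z *\<^sub>C B h) \<in> D" using gh A0D by blast
    have ye: "f' - (h + z *\<^sub>C B h) = z *\<^sub>C y" by (simp add: h_def y_def scaleC_diff_right)
    have yD: "(y, z *\<^sub>C y) \<in> D" using lin_rel_diff[OF linD ffD ghD] ye by (simp add: y_def)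
    have g0: "G0 (B h, h + z *\<^sub>C B h) = 0" using gh unfolding A0_def by blast
    have w: "G0 (y, z *\<^sub>C y) = G0 (f, f')" using G0d[OF ffD ghD] ye g0 by (simp add: y_def)
    have u: "G1 (B h, h + z *\<^sub>C B h) = G1 (f, f') - G1 (y, z *\<^sub>C y)"
      using G1d[OF ffD ghD] ye by (simp add: y_def)
    have m1: "(G0 (f, f'), G1 (B h, h + z *\<^sub>C B h)) \<in> rel_diff \<Theta> (weyl_fun D G0 G1 z)"
    proof -
      have t1: "(G0 (f, f'), G1 (f, f')) \<in> \<Theta>" unfolding \<Theta>_def using ffT by blast
      have t2: "(G0 (f, f'), G1 (y, z *\<^sub>C y)) \<in> weyl_fun D G0 G1 z"
        unfolding weyl_fun_def w[symmetric] using yD by blast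
      show ?thesis unfolding rel_diff_def u using t1 t2 by blast
    qed
    have m2: "(h, G0 (f, f')) \<in> rel_mult (rel_inv (rel_diff \<Theta> (weyl_fun D G0 G1 z)))
          (rel_adj (gamma_field D G0 (cnj z)))"
      unfolding rel_mult_def rel_inv_def using AdjG[of h] m1 by blast
    have m3: "(G0 (f, f'), y) \<in> gamma_field D G0 z"
      unfolding gamma_field_def using yD w by force
    have m4: "(h, B h) \<in> rel_inv (rel_shift A0 z)" using RB by blast
    have "f = B h + y" by (simp add: y_def)
    then show "hf \<in> lrel_sum (rel_inv (rel_shift A0 z))
      (rel_mult (gamma_field D G0 z)
        (rel_mult (rel_inv (rel_diff \<Theta> (weyl_fun D G0 G1 z)))
          (rel_adj (gamma_field D G0 (cnj z)))))"
      unfolding lrel_sum_def hf h_def[symmetric] using m4 m2 m3 unfolding rel_mult_def by blast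
  next
    fix hf assume "hf \<in> lrel_sum (rel_inv (rel_shift A0 z))
      (rel_mult (gamma_field D G0 z)
        (rel_mult (rel_inv (rel_diff \<Theta> (weyl_fun D G0 G1 z)))
          (rel_adj (gamma_field D G0 (cnj z)))))"
    then obtain h y w u where hf: "hf = (h, B h + y)"
      and wy: "(w, y) \<in> gamma_field D G0 z"
      and hu: "(h, u) \<in> rel_adj (gamma_field D G0 (cnj z))"
      and wu: "(w, u) \<in> rel_diff \<Theta> (weyl_fun D G0 G1 z)"
      unfolding lrel_sum_def rel_mult_def RB unfolding rel_inv_def by blast
    from wy obtain y0 where yD: "(y, z *\<^sub>C y) \<in> D" and wdef: "w = G0 (y, z *\<^sub>C y)"
      unfolding gamma_field_def by blast
    from wu obtain g1 k1 where ug: "u = g1 - k1" and wg: "(w, g1) \<in> \<Theta>"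
      and wk: "(w, k1) \<in> weyl_fun D G0 G1 z"
      unfolding rel_diff_def by blast
    from wg obtain fh where fhT: "fh \<in> A\<Theta>" "w = G0 fh" "g1 = G1 fh" unfolding \<Theta>_def by blast
    obtain a a' where fha: "fh = (a, a')" by fastforce
    have aT: "(a, a') \<in> A\<Theta>" and wa: "w = G0 (a, a')" using fhT fha by auto
    from wk obtain x where xD: "(x, z *\<^sub>C x) \<in> D" and wx: "w = G0 (x, z *\<^sub>C x)"
      and kx: "k1 = G1 (x, z *\<^sub>C x)"
      unfolding weyl_fun_def by blast
    have udef: "u = G1 (a, a') - G1 (x, z *\<^sub>C x)" using ug kx fhT fha by simp
    have "(x - y, z *\<^sub>C x - z *\<^sub>C y) \<in> A0"
      unfolding A0_def using lin_rel_diff[OF linD xD yD] G0d[OF xD yD] wx wdef by simp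
    then have "(x - y, z *\<^sub>C (x - y)) \<in> A0" by (simp add: scaleC_diff_right)
    then have xy: "x = y" using Nz by fastforce
    have aD: "(a, a') \<in> D" using aT TD by blast
    have ghD: "(B h, h + z *\<^sub>C B h) \<in> D" using gh A0D by blast
    have g0: "G0 (B h, h + z *\<^sub>C B h) = 0" using gh unfolding A0_def by blast
    define k where "k = a - B h - y"
    define k' where "k' = a' - (h + z *\<^sub>C B h) - z *\<^sub>C y"
    have kD1: "(a - B h, a' - (h + z *\<^sub>C B h)) \<in> D" by (rule lin_rel_diff[OF linD aD ghD])
    have kD: "(k, k') \<in> D" unfolding k_def k'_def by (rule lin_rel_diff[OF linD kD1 yD])
    have Gk0: "G0 (k, k') = 0"
      unfolding k_def k'_def using G0d[OF kD1 yD] G0d[OF aD ghD] g0 wa wdef by simp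
    have Gk1: "G1 (k, k') = u - G1 (B h, h + z *\<^sub>C B h)"
      unfolding k_def k'_def using G1d[OF kD1 yD] G1d[OF aD ghD] udef xy by simp
    have orth: "cinner (u - G1 (B h, h + z *\<^sub>C B h)) (G0 (d, d')) = 0" if dD: "(d, d') \<in> D" for d d'
    proof -
      obtain a0 a0' where a0: "(a0, a0') \<in> A0" and a0e: "a0' - cnj z *\<^sub>C a0 = d' - cnj z *\<^sub>C d"
        using N1 by blast
      have a0D: "(a0, a0') \<in> D" using a0 A0D by blast
      have qe: "d' - a0' = cnj z *\<^sub>C (d - a0)"
        using a0e by (simp add: scaleC_diff_right algebra_simps)
      have qD: "(d - a0, cnj z *\<^sub>C (d - a0)) \<in> D" using lin_rel_diff[OF linD dD a0D] qe by simp
      have Gq: "G0 (d - a0, cnj z *\<^sub>C (d - a0)) = G0 (d, d')"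
        using G0d[OF dD a0D] qe a0 unfolding A0_def by simp
      have "(G0 (d - a0, cnj z *\<^sub>C (d - a0)), d - a0) \<in> gamma_field D G0 (cnj z)"
        unfolding gamma_field_def using qD by blast
      then have "cinner u (G0 (d - a0, cnj z *\<^sub>C (d - a0))) = cinner h (d - a0)"
        using hu unfolding rel_adj_def by blast
      moreover have "cinner (G1 (B h, h + z *\<^sub>C B h)) (G0 (d - a0, cnj z *\<^sub>C (d - a0))) = cinner h (d - a0)"
        by (rule GQ[OF qD])
      ultimately show ?thesis using Gq by (simp add: cinner_diff_left)
    qed
    have kperp: "cinner k' d - cinner k d' = 0" if "(d, d') \<in> D" for d d'
      using green kD that Gk0 Gk1 orth[OF that] by simp
    define C where "C = {p. cinner k' (fst p) - cinner k (snd p) = 0}"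
    have blC: "bounded_linear (\<lambda>p::'h \<times> 'h. cinner k' (fst p) - cinner k (snd p))"
      by (intro bounded_linear_sub bounded_linear_compose[OF bl_cinner_right bounded_linear_fst]
          bounded_linear_compose[OF bl_cinner_right bounded_linear_snd])
    have clC: "closed C" unfolding C_def
      by (rule closed_Collect_eq) (auto intro: linear_continuous_on blC)
    have "D \<subseteq> C" unfolding C_def using kperp by auto
    then have "closure D \<subseteq> C" using clC by (rule closure_minimal)
    then have "rel_adj A \<subseteq> C" using cloD by blast
    then have "\<forall>g g'. (g, g') \<in> rel_adj A \<longrightarrow> cinner k' g = cinner k g'"
      unfolding C_def by auto
    then have "(k, k') \<in> rel_adj (rel_adj A)"
      unfolding rel_adj_def[of "rel_adj A"] by simp
    then have "(k, k') \<in> A" using adj_adj[OF linA clA] by blast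
    then have kT: "(k, k') \<in> A\<Theta>" using AT by blast
    have fT: "(a - k, a' - k') \<in> A\<Theta>" by (rule lin_rel_diff[OF linT aT kT])
    have e1: "a - k = B h + y" by (simp add: k_def)
    have e2: "a' - k' - z *\<^sub>C (a - k) = h"
      unfolding e1 by (simp add: k'_def scaleC_add_right)
    show "hf \<in> rel_inv (rel_shift A\<Theta> z)"
      unfolding rel_inv_def rel_shift_def hf using fT e1 e2 by force
  qed
  then show ?thesis unfolding A0_def \<Theta>_def .
qed
end
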